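(* For $n\geq 1$, $$P^{(\mathsf{inv}, \mathsf{exc})}(\mathfrak{D}_n(321); q, t)=\left(\frac{1+xt}{1+x}\right)^{n}P^{(\mathsf{inv}, \mathsf{cpk},\mathsf{exc})}\left(\mathfrak{D}_n(321); q, \frac{(1+x)^{2}t}{(x+t)(1+xt)},\frac{x+t}{1+xt}\right),$$ equivalently, $$P^{(\mathsf{inv}, \mathsf{cpk},\mathsf{exc})}(\mathfrak{D}_n(321); q, x,t)=\left(\frac{1+u}{1+uv}\right)^{n}P^{(\mathsf{inv}, \mathsf{exc})}(\mathfrak{D}_n(321); q, v),$$ where $u=\frac{1+t^{2}-2xt-(1-t)\sqrt{(1+t)^{2}-4xt}}{2(1-x)t}$ and $v=\frac{(1+t)^{2}-2xt-(1+t)\sqrt{(1+t)^{2}-4xt}}{2xt}$.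
   Context: $\mathfrak{D}_n(321)$ is the set of derangements of $[n]$ avoiding the pattern $321$. $P^{(\mathsf{stat}_1,\ldots,\mathsf{stat}_m)}(\Omega;t_1,\ldots,t_m)=\sum_{\sigma\in\Omega}\prod_jt_j^{\mathsf{stat}_j\sigma}$. $\mathsf{inv}$ is the inversion number, $\mathsf{exc}\,\sigma=\#\{i:\sigma(i)>i\}$, $\mathsf{cpk}\,\sigma=\#\{x:\sigma^{-1}(x)<x>\sigma(x)\}$. *)

theory Defs
  imports "HOL-Combinatorics.Permutations" Complex_Main
begin

definition derangements_321 :: "nat \<Rightarrow> (nat \<Rightarrow> nat) set" where
  "derangements_321 n = {\<sigma>. \<sigma> permutes {1..n}
      \<and> (\<forall>i\<in>{1..n}. \<sigma> i \<noteq> i)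
      \<and> \<not> (\<exists>i j k. 1 \<le> i \<and> i < j \<and> j < k \<and> k \<le> n \<and> \<sigma> i > \<sigma> j \<and> \<sigma> j > \<sigma> k)}"

definition inv_stat :: "nat \<Rightarrow> (nat \<Rightarrow> nat) \<Rightarrow> nat" where
  "inv_stat n \<sigma> = card {(i, j). 1 \<le> i \<and> i < j \<and> j \<le> n \<and> \<sigma> i > \<sigma> j}"

definition exc_stat :: "nat \<Rightarrow> (nat \<Rightarrow> nat) \<Rightarrow> nat" where
  "exc_stat n \<sigma> = card {i \<in> {1..n}. \<sigma> i > i}"

definition cpk_stat :: "nat \<Rightarrow> (nat \<Rightarrow> nat) \<Rightarrow> nat" where
  "cpk_stat n \<sigma> = card {x \<in> {1..n}. inv \<sigma> x < x \<and> x > \<sigma> x}"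

definition P_inv_exc :: "nat \<Rightarrow> real \<Rightarrow> real \<Rightarrow> real" where
  "P_inv_exc n q t = (\<Sum>\<sigma>\<in>derangements_321 n. q ^ inv_stat n \<sigma> * t ^ exc_stat n \<sigma>)"

definition P_inv_cpk_exc :: "nat \<Rightarrow> real \<Rightarrow> real \<Rightarrow> real \<Rightarrow> real" where
  "P_inv_cpk_exc n q y t = (\<Sum>\<sigma>\<in>derangements_321 n.
      q ^ inv_stat n \<sigma> * y ^ cpk_stat n \<sigma> * t ^ exc_stat n \<sigma>)"

end

theory Submission
  imports Defs
begin

definition rk :: "nat set \<Rightarrow> nat \<Rightarrow> nat" where "rk X x = card {u\<in>X. u < x}"
definition mb :: "nat set \<Rightarrow> nat set \<Rightarrow> nat \<Rightarrow> nat" where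
  "mb X Y x = inv_into Y (rk Y) (rk X x)"

lemma rk_less: assumes "finite X" "u \<in> X" "u < v" shows "rk X u < rk X v"
proof -
  have "{w\<in>X. w < u} \<subset> {w\<in>X. w < v}" using assms by auto
  then show ?thesis unfolding rk_def using assms(1) by (intro psubset_card_mono) auto
qed

lemma rk_inj: assumes "finite X" shows "inj_on (rk X) X"
proof (rule inj_onI)
  fix u v assume "u \<in> X" "v \<in> X" "rk X u = rk X v"
  then show "u = v" using rk_less[OF assms, of u v] rk_less[OF assms, of v u]
    by (metis less_irrefl nat_neq_iff)
qed

lemma rk_bound: assumes "finite X" "u \<in> X" shows "rk X u < card X"
  unfolding rk_def using assms by (intro psubset_card_mono) auto

lemma rk_bij: assumes "finite X" shows "bij_betw (rk X) X {..<card X}"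
proof -
  have "rk X ` X \<subseteq> {..<card X}" using rk_bound[OF assms] by auto
  moreover have "card (rk X ` X) = card X" using card_image[OF rk_inj[OF assms]] .
  ultimately have "rk X ` X = {..<card X}"
    by (intro card_subset_eq) auto
  then show ?thesis using rk_inj[OF assms] unfolding bij_betw_def by auto
qed

lemma mb_props:
  assumes "finite X" "finite Y" "card X = card Y"
  shows "bij_betw (mb X Y) X Y"
    and "\<And>x. x \<in> X \<Longrightarrow> rk Y (mb X Y x) = rk X x"
    and "\<And>x x'. x \<in> X \<Longrightarrow> x' \<in> X \<Longrightarrow> x < x' \<Longrightarrow> mb X Y x < mb X Y x'"
proof -
  have bx: "bij_betw (rk X) X {..<card Y}" using rk_bij[OF assms(1)] assms(3) by simp
  have by': "bij_betw (inv_into Y (rk Y)) {..<card Y} Y"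
    using rk_bij[OF assms(2)] by (rule bij_betw_inv_into)
  show b: "bij_betw (mb X Y) X Y" unfolding mb_def[abs_def]
    using bij_betw_trans[OF bx by'] by (simp add: o_def)
  show r: "rk Y (mb X Y x) = rk X x" if "x \<in> X" for x
  proof -
    have "rk X x \<in> rk Y ` Y" using rk_bij[OF assms(2)] bx that
      unfolding bij_betw_def by auto
    then show ?thesis unfolding mb_def by (simp add: f_inv_into_f)
  qed
  show "mb X Y x < mb X Y x'" if "x \<in> X" "x' \<in> X" "x < x'" for x x'
  proof (rule ccontr)
    assume "\<not> mb X Y x < mb X Y x'"
    then have "mb X Y x' \<le> mb X Y x" by simp
    moreover have "mb X Y x' \<in> Y" "mb X Y x \<in> Y" using b that unfolding bij_betw_def by auto
    ultimately have "rk Y (mb X Y x') \<le> rk Y (mb X Y x)"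
      using rk_less[OF assms(2), of "mb X Y x'" "mb X Y x"] by (cases "mb X Y x' = mb X Y x") auto
    then show False using r that rk_less[OF assms(1), of x x'] by simp
  qed
qed

lemma mb_unique:
  assumes "finite X" "finite Y" "bij_betw f X Y" "\<And>x x'. x \<in> X \<Longrightarrow> x' \<in> X \<Longrightarrow> x < x' \<Longrightarrow> f x < f x'"
    "x \<in> X"
  shows "f x = mb X Y x"
proof -
  have inj: "inj_on f X" using assms(3) by (simp add: bij_betw_def)
  have "{y\<in>Y. y < f x} = f ` {u\<in>X. u < x}"
  proof
    show "f ` {u\<in>X. u < x} \<subseteq> {y\<in>Y. y < f x}" using assms(3,4,5) by (auto simp: bij_betw_def)
    show "{y\<in>Y. y < f x} \<subseteq> f ` {u\<in>X. u < x}"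
    proof
      fix y assume y: "y \<in> {y\<in>Y. y < f x}"
      then obtain u where u: "u \<in> X" "y = f u" using assms(3) by (auto simp: bij_betw_def)
      have "u < x"
      proof (rule ccontr)
        assume "\<not> u < x"
        then have "x < u \<or> x = u" by auto
        then show False using assms(4)[OF assms(5) u(1)] y u by auto
      qed
      then show "y \<in> f ` {u\<in>X. u < x}" using u by auto
    qed
  qed
  then have "rk Y (f x) = rk X x" unfolding rk_def
    using card_image[OF inj_on_subset[OF inj, of "{u\<in>X. u < x}"]] by auto
  moreover have "f x \<in> Y" using assms(3,5) by (auto simp: bij_betw_def)
  ultimately show ?thesis unfolding mb_def using inv_into_f_f[OF rk_inj[OF assms(2)]] by metis
qed

lemma D_props:
  assumes "\<sigma> \<in> derangements_321 n"
  shows "\<sigma> permutes {1..n}" "\<And>i. i \<in> {1..n} \<Longrightarrow> \<sigma> i \<noteq> i"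
    "\<And>i j k. 1 \<le> i \<Longrightarrow> i < j \<Longrightarrow> j < k \<Longrightarrow> k \<le> n \<Longrightarrow> \<sigma> i > \<sigma> j \<Longrightarrow> \<sigma> j > \<sigma> k \<Longrightarrow> False"
  using assms unfolding derangements_321_def by blast+

lemma perm_facts:
  assumes "\<sigma> permutes {1..n}"
  shows "\<And>i. i \<in> {1..n} \<Longrightarrow> \<sigma> i \<in> {1..n}" "inj \<sigma>" "\<And>i. i \<notin> {1..n} \<Longrightarrow> \<sigma> i = i"
    "\<sigma> ` {1..n} = {1..n}"
  using assms permutes_in_image permutes_inj permutes_not_in permutes_image by fastforce+

lemma incr_E:
  assumes D: "\<sigma> \<in> derangements_321 n" and ij: "i < j" "i \<in> {1..n}" "j \<in> {1..n}"
    and ex: "\<sigma> i > i" "\<sigma> j > j"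
  shows "\<sigma> i < \<sigma> j"
proof (rule ccontr)
  assume "\<not> \<sigma> i < \<sigma> j"
  moreover have "\<sigma> i \<noteq> \<sigma> j" using perm_facts(2)[OF D_props(1)[OF D]] ij by (metis injD less_irrefl)
  ultimately have lt: "\<sigma> j < \<sigma> i" by simp
  have P: "\<sigma> permutes {1..n}" using D_props(1)[OF D] .
  have all: "\<sigma> k > \<sigma> j" if "k \<in> {j<..n}" for k
  proof (rule ccontr)
    assume "\<not> \<sigma> j < \<sigma> k"
    moreover have "\<sigma> k \<noteq> \<sigma> j" using perm_facts(2)[OF P] that by (metis greaterThanAtMost_iff inj_eq less_irrefl)
    ultimately have "\<sigma> k < \<sigma> j" by simp
    then show False using D_props(3)[OF D, of i j k] ij lt that by auto
  qed
  have "\<sigma> ` {j<..n} \<subseteq> {\<sigma> j<..n} - {\<sigma> i}"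
  proof
    fix y assume "y \<in> \<sigma> ` {j<..n}"
    then obtain k where k: "k \<in> {j<..n}" "y = \<sigma> k" by auto
    have "\<sigma> k \<in> {1..n}" using perm_facts(1)[OF P] k ij by auto
    moreover have "\<sigma> k \<noteq> \<sigma> i" using perm_facts(2)[OF P] k ij by (metis greaterThanAtMost_iff inj_eq not_less_iff_gr_or_eq)
    ultimately show "y \<in> {\<sigma> j<..n} - {\<sigma> i}" using all[OF k(1)] k by auto
  qed
  then have "card (\<sigma> ` {j<..n}) \<le> card ({\<sigma> j<..n} - {\<sigma> i})" by (intro card_mono) auto
  moreover have "card (\<sigma> ` {j<..n}) = n - j"
    using card_image[OF inj_on_subset[OF perm_facts(2)[OF P]]] by simp
  moreover have "\<sigma> i \<in> {\<sigma> j<..n}" using lt perm_facts(1)[OF P] ij by auto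
  then have "card ({\<sigma> j<..n} - {\<sigma> i}) = n - \<sigma> j - 1" by simp
  ultimately show False using ex lt perm_facts(1)[OF P] ij by fastforce
qed

lemma incr_F:
  assumes D: "\<sigma> \<in> derangements_321 n" and ij: "i < j" "i \<in> {1..n}" "j \<in> {1..n}"
    and ex: "\<sigma> i < i" "\<sigma> j < j"
  shows "\<sigma> i < \<sigma> j"
proof (rule ccontr)
  assume "\<not> \<sigma> i < \<sigma> j"
  moreover have "\<sigma> i \<noteq> \<sigma> j" using perm_facts(2)[OF D_props(1)[OF D]] ij by (metis injD less_irrefl)
  ultimately have lt: "\<sigma> j < \<sigma> i" by simp
  have P: "\<sigma> permutes {1..n}" using D_props(1)[OF D] .
  have all: "\<sigma> k < \<sigma> i" if "k \<in> {1..<i}" for k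
  proof (rule ccontr)
    assume "\<not> \<sigma> k < \<sigma> i"
    moreover have "\<sigma> k \<noteq> \<sigma> i" using perm_facts(2)[OF P] that by (metis atLeastLessThan_iff inj_eq less_irrefl)
    ultimately have "\<sigma> i < \<sigma> k" by simp
    then show False using D_props(3)[OF D, of k i j] ij lt that by auto
  qed
  have "\<sigma> ` {1..<i} \<subseteq> {1..<\<sigma> i} - {\<sigma> j}"
  proof
    fix y assume "y \<in> \<sigma> ` {1..<i}"
    then obtain k where k: "k \<in> {1..<i}" "y = \<sigma> k" by auto
    have "\<sigma> k \<in> {1..n}" using perm_facts(1)[OF P] k ij by auto
    moreover have "\<sigma> k \<noteq> \<sigma> j" using perm_facts(2)[OF P] k ij by (metis atLeastLessThan_iff inj_eq not_less_iff_gr_or_eq order.strict_trans)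
    ultimately show "y \<in> {1..<\<sigma> i} - {\<sigma> j}" using all[OF k(1)] k by auto
  qed
  then have "card (\<sigma> ` {1..<i}) \<le> card ({1..<\<sigma> i} - {\<sigma> j})" by (intro card_mono) auto
  moreover have "card (\<sigma> ` {1..<i}) = i - 1"
    using card_image[OF inj_on_subset[OF perm_facts(2)[OF P]]] by simp
  moreover have "\<sigma> j \<in> {1..<\<sigma> i}" using lt perm_facts(1)[OF P] ij by auto
  then have "card ({1..<\<sigma> i} - {\<sigma> j}) = \<sigma> i - 1 - 1" by simp
  ultimately show False using ex lt perm_facts(1)[OF P] ij by fastforce
qed

definition Es :: "nat \<Rightarrow> (nat \<Rightarrow> nat) \<Rightarrow> nat set" where "Es n \<sigma> = {i\<in>{1..n}. \<sigma> i > i}"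
definition Vs :: "nat \<Rightarrow> (nat \<Rightarrow> nat) \<Rightarrow> nat set" where "Vs n \<sigma> = \<sigma> ` Es n \<sigma>"
definition cnt :: "nat set \<Rightarrow> nat \<Rightarrow> nat" where "cnt X m = card {u\<in>X. u \<le> m}"
definition build :: "nat \<Rightarrow> nat set \<Rightarrow> nat set \<Rightarrow> nat \<Rightarrow> nat" where
  "build n E V i = (if i \<in> E then mb E V i else if i \<in> {1..n} then mb ({1..n}-E) ({1..n}-V) i else i)"
definition valid :: "nat \<Rightarrow> nat set \<Rightarrow> nat set \<Rightarrow> bool" where
  "valid n E V \<longleftrightarrow> E \<subseteq> {1..n} \<and> V \<subseteq> {1..n} \<and> card E = card V \<and>
     (\<forall>m\<in>{1..n}. cnt V m + (if m \<in> V \<and> m \<notin> E then 0 else 1) \<le> cnt E m)"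

lemma D_struct:
  assumes D: "\<sigma> \<in> derangements_321 n"
  defines "E \<equiv> Es n \<sigma>" and "V \<equiv> Vs n \<sigma>"
  shows "bij_betw \<sigma> E V" "bij_betw \<sigma> ({1..n}-E) ({1..n}-V)"
    "{1..n} - E = {i\<in>{1..n}. \<sigma> i < i}" "E \<subseteq> {1..n}" "V \<subseteq> {1..n}"
proof -
  have P: "\<sigma> permutes {1..n}" using D_props(1)[OF D] .
  have inj: "inj \<sigma>" using perm_facts(2)[OF P] .
  show "E \<subseteq> {1..n}" unfolding E_def Es_def by auto
  then show "V \<subseteq> {1..n}" unfolding V_def Vs_def E_def[symmetric] using perm_facts(1)[OF P] by auto
  show b1: "bij_betw \<sigma> E V" unfolding V_def Vs_def E_def[symmetric]
    using inj by (simp add: bij_betw_imageI inj_on_subset)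
  show "{1..n} - E = {i\<in>{1..n}. \<sigma> i < i}" unfolding E_def Es_def
    using D_props(2)[OF D] by (fastforce simp: nat_neq_iff)
  have "\<sigma> ` ({1..n} - E) = \<sigma> ` {1..n} - \<sigma> ` E" using inj by (simp add: image_set_diff)
  also have "\<dots> = {1..n} - V" unfolding V_def Vs_def E_def[symmetric] using perm_facts(4)[OF P] by simp
  finally show "bij_betw \<sigma> ({1..n}-E) ({1..n}-V)"
    using inj by (simp add: bij_betw_def inj_on_subset[OF inj])
qed

lemma sigma_build:
  assumes D: "\<sigma> \<in> derangements_321 n"
  shows "\<sigma> = build n (Es n \<sigma>) (Vs n \<sigma>)"
proof
  fix i
  let ?E = "Es n \<sigma>" and ?V = "Vs n \<sigma>"
  note S = D_struct[OF D]
  have P: "\<sigma> permutes {1..n}" using D_props(1)[OF D] .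
  show "\<sigma> i = build n ?E ?V i"
  proof (cases "i \<in> ?E")
    case True
    have "\<sigma> i = mb ?E ?V i"
      apply (rule mb_unique[OF _ _ S(1) _ True])
        apply (meson S(4) finite_atLeastAtMost finite_subset)
       apply (meson S(5) finite_atLeastAtMost finite_subset)
      using incr_E[OF D] unfolding Es_def by auto
    then show ?thesis using True unfolding build_def by simp
  next
    case False
    show ?thesis
    proof (cases "i \<in> {1..n}")
      case True
      then have iF: "i \<in> {1..n} - ?E" using False by simp
      have Fc: "\<And>j. j \<in> {1..n} - ?E \<Longrightarrow> \<sigma> j < j" using S(3) by blast
      have "\<sigma> i = mb ({1..n} - ?E) ({1..n} - ?V) i"
        apply (rule mb_unique[OF _ _ S(2) _ iF])
        subgoal by simp
        subgoal by simp
        subgoal for x x' using incr_F[OF D, of x x'] Fc[of x] Fc[of x'] by auto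
        done
      then show ?thesis using True False unfolding build_def by simp
    next
      case False
      then show ?thesis using \<open>i \<notin> ?E\<close> perm_facts(3)[OF P, of i] unfolding build_def by auto
    qed
  qed
qed

lemma split_le: assumes "X \<subseteq> {1..n}" "m \<le> n"
  shows "card {u\<in>X. u\<le>m} + card {u\<in>{1..n}-X. u\<le>m} = m"
proof -
  have "card {u\<in>X. u\<le>m} + card {u\<in>{1..n}-X. u\<le>m} = card ({u\<in>X. u\<le>m} \<union> {u\<in>{1..n}-X. u\<le>m})"
    by (rule card_Un_disjoint[symmetric]) (auto intro: finite_subset[of _ "{..m}"])
  also have "{u\<in>X. u\<le>m} \<union> {u\<in>{1..n}-X. u\<le>m} = {1..m}" using assms by auto
  finally show ?thesis by simp
qed

lemma split_less: assumes "X \<subseteq> {1..n}" "m \<le> n"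
  shows "card {u\<in>X. u<m} + card {u\<in>{1..n}-X. u<m} = m - 1"
proof -
  have "card {u\<in>X. u<m} + card {u\<in>{1..n}-X. u<m} = card ({u\<in>X. u<m} \<union> {u\<in>{1..n}-X. u<m})"
    by (rule card_Un_disjoint[symmetric]) (auto intro: finite_subset[of _ "{..<m}"])
  also have "{u\<in>X. u<m} \<union> {u\<in>{1..n}-X. u<m} = {1..<m}" using assms by auto
  finally show ?thesis by simp
qed

lemma cnt_less: assumes "finite X" shows "cnt X m = card {u\<in>X. u<m} + (if m \<in> X then 1 else 0)"
proof (cases "m \<in> X")
  case True
  have "{u\<in>X. u\<le>m} = insert m {u\<in>X. u<m}" using True by auto
  then show ?thesis unfolding cnt_def using True assms by simp
next
  case False
  have "{u\<in>X. u\<le>m} = {u\<in>X. u<m}" using False by (auto simp: le_less)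
  then show ?thesis unfolding cnt_def using False by simp
qed

lemma valid_D:
  assumes D: "\<sigma> \<in> derangements_321 n"
  shows "valid n (Es n \<sigma>) (Vs n \<sigma>)"
proof -
  define E where "E = Es n \<sigma>"
  define V where "V = Vs n \<sigma>"
  note S = D_struct[OF D, folded E_def V_def]
  have P: "\<sigma> permutes {1..n}" using D_props(1)[OF D] .
  have inj: "inj \<sigma>" using perm_facts(2)[OF P] .
  have fE: "finite E" and fV: "finite V" using S(4,5) finite_subset by blast+
  have Ec: "\<And>i. i \<in> E \<longleftrightarrow> i \<in> {1..n} \<and> \<sigma> i > i" unfolding E_def Es_def by simp
  have Fc: "\<And>i. i \<in> {1..n} - E \<Longrightarrow> \<sigma> i < i" using S(3) by blast
  have cd: "card E = card V" using S(1) bij_betw_same_card by blast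
  have main: "cnt V m + (if m \<in> V \<and> m \<notin> E then 0 else 1) \<le> cnt E m" if m: "m \<in> {1..n}" for m
  proof (cases "m \<in> E")
    case True
    have "{v\<in>V. v\<le>m} \<subseteq> \<sigma> ` {e\<in>E. e<m}"
    proof
      fix v assume v: "v \<in> {v\<in>V. v\<le>m}"
      then obtain e where e: "e \<in> E" "v = \<sigma> e" unfolding V_def Vs_def E_def by auto
      have "e < m"
      proof (rule ccontr)
        assume "\<not> e < m"
        then have "m < e \<or> m = e" by auto
        then show False using incr_E[OF D, of m e] Ec[of m] Ec[of e] True e v by auto
      qed
      then show "v \<in> \<sigma> ` {e\<in>E. e<m}" using e by auto
    qed
    then have "card {v\<in>V. v\<le>m} \<le> card (\<sigma> ` {e\<in>E. e<m})" by (intro card_mono) (use fE in auto)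
    also have "\<dots> = card {e\<in>E. e<m}" by (rule card_image) (rule inj_on_subset[OF inj], simp)
    finally show ?thesis using cnt_less[OF fE, of m] True unfolding cnt_def by simp
  next
    case False
    let ?F = "{1..n} - E" and ?W = "{1..n} - V"
    have mF: "m \<in> ?F" using False m by simp
    have "\<sigma> ` {f\<in>?F. f\<le>m} \<subseteq> {w\<in>?W. w<m}"
    proof
      fix w assume "w \<in> \<sigma> ` {f\<in>?F. f\<le>m}"
      then obtain f where f: "f \<in> ?F" "f \<le> m" "w = \<sigma> f" by auto
      have "\<sigma> f \<le> \<sigma> m" using incr_F[OF D, of f m] f mF Fc[of f] Fc[of m] by (cases "f = m") auto
      then have "w < m" using Fc[OF mF] f by simp
      moreover have "w \<in> ?W" using S(2) f unfolding bij_betw_def by auto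
      ultimately show "w \<in> {w\<in>?W. w<m}" by simp
    qed
    then have "card (\<sigma> ` {f\<in>?F. f\<le>m}) \<le> card {w\<in>?W. w<m}" by (intro card_mono) auto
    moreover have "card (\<sigma> ` {f\<in>?F. f\<le>m}) = card {f\<in>?F. f\<le>m}"
      by (rule card_image) (rule inj_on_subset[OF inj], simp)
    ultimately have le: "card {f\<in>?F. f\<le>m} \<le> card {w\<in>?W. w<m}" by simp
    have a: "cnt E m + card {f\<in>?F. f\<le>m} = m" using split_le[OF S(4), of m] m unfolding cnt_def by simp
    have b: "card {u\<in>V. u<m} + card {w\<in>?W. w<m} = m - 1" using split_less[OF S(5), of m] m by simp
    have c: "cnt V m = card {u\<in>V. u<m} + (if m \<in> V then 1 else 0)" using cnt_less[OF fV] .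
    have m1: "1 \<le> m" using m by simp
    show ?thesis
    proof (cases "m \<in> V")
      case True
      then have "cnt V m = card {u\<in>V. u<m} + 1" using c by simp
      moreover have "(if m \<in> V \<and> m \<notin> E then 0 else 1) = (0::nat)" using True False by simp
      ultimately show ?thesis using a b le m1 by linarith
    next
      case f2: False
      then have "cnt V m = card {u\<in>V. u<m}" using c by simp
      moreover have "(if m \<in> V \<and> m \<notin> E then 0 else 1) = (1::nat)" using f2 by simp
      ultimately show ?thesis using a b le m1 by linarith
    qed
  qed
  have "valid n E V" unfolding valid_def by (intro conjI S(4) S(5) cd ballI main)
  then show ?thesis unfolding E_def V_def .
qed

lemma build_D:
  assumes val: "valid n E V"
  shows "build n E V \<in> derangements_321 n" "Es n (build n E V) = E" "Vs n (build n E V) = V"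
proof -
  define F where "F = {1..n} - E"
  define W where "W = {1..n} - V"
  define \<beta> where "\<beta> = build n E V"
  have EV: "E \<subseteq> {1..n}" "V \<subseteq> {1..n}" "card E = card V"
    and vm: "\<And>m. m \<in> {1..n} \<Longrightarrow> cnt V m + (if m \<in> V \<and> m \<notin> E then 0 else 1) \<le> cnt E m"
    using val unfolding valid_def by blast+
  have fE: "finite E" and fV: "finite V" using EV finite_subset by blast+
  have fF: "finite F" and fW: "finite W" unfolding F_def W_def by auto
  have cFW: "card F = card W" unfolding F_def W_def using EV
    by (simp add: card_Diff_subset fE fV)
  note mE = mb_props[OF fE fV EV(3)]
  note mF = mb_props[OF fF fW cFW]
  have bE: "\<And>i. i \<in> E \<Longrightarrow> \<beta> i = mb E V i" unfolding \<beta>_def build_def by simp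
  have bF: "\<And>i. i \<in> F \<Longrightarrow> \<beta> i = mb F W i" unfolding \<beta>_def build_def F_def W_def by simp
  have bO: "\<And>i. i \<notin> {1..n} \<Longrightarrow> \<beta> i = i" unfolding \<beta>_def build_def using EV by auto
  have up: "\<beta> e > e" if e: "e \<in> E" for e
  proof (rule ccontr)
    let ?v = "mb E V e"
    assume "\<not> \<beta> e > e"
    then have le: "?v \<le> e" using bE[OF e] by simp
    have vV: "?v \<in> V" using mE(1) e unfolding bij_betw_def by auto
    have "cnt V ?v \<le> cnt V e" unfolding cnt_def using le fV by (intro card_mono) auto
    moreover have "cnt V ?v = rk V ?v + 1" using cnt_less[OF fV, of ?v] vV unfolding rk_def by simp
    moreover have "cnt E e = rk E e + 1" using cnt_less[OF fE, of e] e unfolding rk_def by simp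
    moreover have "cnt V e + 1 \<le> cnt E e" using vm[of e] e EV(1) by auto
    ultimately show False using mE(2)[OF e] by linarith
  qed
  have down: "\<beta> f < f" if f: "f \<in> F" for f
  proof (rule ccontr)
    let ?w = "mb F W f"
    assume "\<not> \<beta> f < f"
    then have le: "f \<le> ?w" using bF[OF f] by simp
    have wW: "?w \<in> W" using mF(1) f unfolding bij_betw_def by auto
    have "card {u\<in>W. u<f} \<le> card {u\<in>W. u < ?w}" using le fW by (intro card_mono) auto
    also have "\<dots> = rk F f" using mF(2)[OF f] unfolding rk_def by simp
    finally have c1: "card {u\<in>W. u<f} \<le> card {u\<in>F. u<f}" unfolding rk_def .
    have fn: "f \<in> {1..n}" "f \<notin> E" using f unfolding F_def by auto
    have s1: "card {u\<in>E. u<f} + card {u\<in>F. u<f} = f - 1" using split_less[OF EV(1), of f] fn unfolding F_def by simp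
    have s2: "card {u\<in>V. u<f} + card {u\<in>W. u<f} = f - 1" using split_less[OF EV(2), of f] fn unfolding W_def by simp
    have c3: "cnt E f = card {u\<in>E. u<f}" using cnt_less[OF fE, of f] fn by simp
    have c4: "card {u\<in>V. u<f} + 1 \<le> cnt E f"
    proof (cases "f \<in> V")
      case True
      then show ?thesis using vm[OF fn(1)] fn cnt_less[OF fV, of f] by simp
    next
      case False
      then show ?thesis using vm[OF fn(1)] fn cnt_less[OF fV, of f] by simp
    qed
    show False using c1 s1 s2 c3 c4 by linarith
  qed
  have EF: "E \<union> F = {1..n}" "V \<union> W = {1..n}" "V \<inter> W = {}" unfolding F_def W_def using EV by auto
  have bij: "bij_betw \<beta> {1..n} {1..n}"
  proof -
    have "bij_betw \<beta> E V" using mE(1) bij_betw_cong[of E \<beta> "mb E V" V] bE by simp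
    moreover have "bij_betw \<beta> F W" using mF(1) bij_betw_cong[of F \<beta> "mb F W" W] bF by simp
    ultimately have "bij_betw \<beta> (E \<union> F) (V \<union> W)" using EF(3) by (rule bij_betw_combine)
    then show ?thesis using EF by simp
  qed
  have perm: "\<beta> permutes {1..n}" by (rule bij_imp_permutes[OF bij bO])
  have monoE: "\<And>a b. a \<in> E \<Longrightarrow> b \<in> E \<Longrightarrow> a < b \<Longrightarrow> \<beta> a < \<beta> b" using mE(3) bE by simp
  have monoF: "\<And>a b. a \<in> F \<Longrightarrow> b \<in> F \<Longrightarrow> a < b \<Longrightarrow> \<beta> a < \<beta> b" using mF(3) bF by simp
  have mem: "\<And>i. i \<in> {1..n} \<Longrightarrow> i \<in> E \<or> i \<in> F" unfolding F_def by auto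
  have no321: "False" if "1 \<le> i" "i < j" "j < k" "k \<le> n" "\<beta> i > \<beta> j" "\<beta> j > \<beta> k" for i j k
  proof -
    have "i \<in> E \<or> i \<in> F" "j \<in> E \<or> j \<in> F" "k \<in> E \<or> k \<in> F" using mem that by auto
    then show False using monoE[of i j] monoE[of j k] monoE[of i k] monoF[of i j] monoF[of j k] monoF[of i k] that
      by auto
  qed
  have der: "\<forall>i\<in>{1..n}. \<beta> i \<noteq> i" using up down mem by (metis less_irrefl)
  show "build n E V \<in> derangements_321 n" unfolding derangements_321_def \<beta>_def[symmetric]
    using perm der no321 by blast
  have EsE: "Es n \<beta> = E" unfolding Es_def using up down mem EV(1) by fastforce
  show "Es n (build n E V) = E" using EsE unfolding \<beta>_def .
  have "Vs n \<beta> = V" unfolding Vs_def EsE using mE(1) bE unfolding bij_betw_def by auto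
  then show "Vs n (build n E V) = V" unfolding \<beta>_def .
qed

lemma cnt_Un: assumes "finite X" "finite Y" "X \<inter> Y = {}" shows "cnt (X \<union> Y) m = cnt X m + cnt Y m"
proof -
  have "{u\<in>X \<union> Y. u\<le>m} = {u\<in>X. u\<le>m} \<union> {u\<in>Y. u\<le>m}" by auto
  moreover have "card ({u\<in>X. u\<le>m} \<union> {u\<in>Y. u\<le>m}) = card {u\<in>X. u\<le>m} + card {u\<in>Y. u\<le>m}"
    by (rule card_Un_disjoint) (use assms in auto)
  ultimately show ?thesis unfolding cnt_def by simp
qed

lemma valid_shift:
  assumes val: "valid n E V" and S: "S \<subseteq> {1..n} - ((E - V) \<union> (V - E))"
  shows "valid n ((E - V) \<union> S) ((V - E) \<union> S)"
proof -
  have EV: "E \<subseteq> {1..n}" "V \<subseteq> {1..n}" "card E = card V"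
    and vm: "\<And>m. m \<in> {1..n} \<Longrightarrow> cnt V m + (if m \<in> V \<and> m \<notin> E then 0 else 1) \<le> cnt E m"
    using val unfolding valid_def by blast+
  have fE: "finite E" by (rule finite_subset[OF EV(1)]) simp
  have fV: "finite V" by (rule finite_subset[OF EV(2)]) simp
  have fS: "finite S" by (rule finite_subset[OF S]) simp
  let ?A = "E - V" and ?B = "V - E" and ?C = "E \<inter> V"
  have eE: "?A \<union> ?C = E" and eV: "?B \<union> ?C = V" by auto
  have fA: "finite ?A" "finite ?B" "finite ?C" using fE fV by auto
  have cA: "cnt E m = cnt ?A m + cnt ?C m" for m
  proof -
    have "cnt (?A \<union> ?C) m = cnt ?A m + cnt ?C m" by (rule cnt_Un) (use fA in auto)
    then show ?thesis unfolding eE .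
  qed
  have cB: "cnt V m = cnt ?B m + cnt ?C m" for m
  proof -
    have "cnt (?B \<union> ?C) m = cnt ?B m + cnt ?C m" by (rule cnt_Un) (use fA in auto)
    then show ?thesis unfolding eV .
  qed
  have cAS: "cnt (?A \<union> S) m = cnt ?A m + cnt S m" for m by (rule cnt_Un) (use fA fS S in auto)
  have cBS: "cnt (?B \<union> S) m = cnt ?B m + cnt S m" for m by (rule cnt_Un) (use fA fS S in auto)
  have card1: "card (?A \<union> S) = card ?A + card S" by (rule card_Un_disjoint) (use fA fS S in auto)
  have card2: "card (?B \<union> S) = card ?B + card S" by (rule card_Un_disjoint) (use fA fS S in auto)
  have card3: "card E = card ?A + card ?C"
  proof -
    have "card (?A \<union> ?C) = card ?A + card ?C" by (rule card_Un_disjoint) (use fA in auto)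
    then show ?thesis unfolding eE .
  qed
  have card4: "card V = card ?B + card ?C"
  proof -
    have "card (?B \<union> ?C) = card ?B + card ?C" by (rule card_Un_disjoint) (use fA in auto)
    then show ?thesis unfolding eV .
  qed
  have main: "cnt (?B \<union> S) m + (if m \<in> ?B \<union> S \<and> m \<notin> ?A \<union> S then 0 else 1) \<le> cnt (?A \<union> S) m"
    if m: "m \<in> {1..n}" for m
  proof -
    have i1: "(if m \<in> ?B \<union> S \<and> m \<notin> ?A \<union> S then 0 else 1) = (if m \<in> V \<and> m \<notin> E then 0 else (1::nat))"
      using S by auto
    show ?thesis unfolding i1 cAS cBS using vm[OF m] cA[of m] cB[of m] by simp
  qed
  show ?thesis unfolding valid_def
    by (intro conjI ballI main) (use EV S card1 card2 card3 card4 in auto)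
qed

lemma exc_eq: "exc_stat n \<sigma> = card (Es n \<sigma>)" unfolding exc_stat_def Es_def by simp

lemma cpk_eq:
  assumes D: "\<sigma> \<in> derangements_321 n"
  shows "cpk_stat n \<sigma> = card (Vs n \<sigma> - Es n \<sigma>)"
proof -
  have P: "\<sigma> permutes {1..n}" using D_props(1)[OF D] .
  have "{x \<in> {1..n}. inv \<sigma> x < x \<and> x > \<sigma> x} = Vs n \<sigma> - Es n \<sigma>"
  proof (intro set_eqI iffI)
    fix x assume x: "x \<in> {x \<in> {1..n}. inv \<sigma> x < x \<and> x > \<sigma> x}"
    let ?e = "inv \<sigma> x"
    have e1: "?e \<in> {1..n}" using x permutes_inv[OF P] permutes_in_image by fastforce
    have e2: "\<sigma> ?e = x" using permutes_inverses(1)[OF P] .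
    have "?e \<in> Es n \<sigma>" unfolding Es_def using e1 e2 x by simp
    then have "x \<in> Vs n \<sigma>" unfolding Vs_def using e2 by force
    moreover have "x \<notin> Es n \<sigma>" unfolding Es_def using x by auto
    ultimately show "x \<in> Vs n \<sigma> - Es n \<sigma>" by simp
  next
    fix x assume x: "x \<in> Vs n \<sigma> - Es n \<sigma>"
    then obtain e where e: "e \<in> Es n \<sigma>" "x = \<sigma> e" unfolding Vs_def by auto
    have e1: "e \<in> {1..n}" "e < \<sigma> e" using e unfolding Es_def by auto
    have xn: "x \<in> {1..n}" using e1 e perm_facts(1)[OF P] by auto
    have "inv \<sigma> x = e" using e permutes_inverses(2)[OF P] by simp
    then have "inv \<sigma> x < x" using e1 e by simp
    moreover have "\<sigma> x < x" using x xn D_props(2)[OF D, of x] unfolding Es_def by auto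
    ultimately show "x \<in> {x \<in> {1..n}. inv \<sigma> x < x \<and> x > \<sigma> x}" using xn by simp
  qed
  then show ?thesis unfolding cpk_stat_def by simp
qed

lemma inv_eq:
  assumes D: "\<sigma> \<in> derangements_321 n"
  shows "inv_stat n \<sigma> + sum id (Es n \<sigma>) = sum id (Vs n \<sigma>)"
proof -
  let ?E = "Es n \<sigma>"
  define B where "B i = {j. i<j \<and> j\<le>n \<and> \<sigma> j < \<sigma> i}" for i
  have P: "\<sigma> permutes {1..n}" using D_props(1)[OF D] .
  have inj: "inj \<sigma>" using perm_facts(2)[OF P] .
  have Ec: "\<And>i. i \<in> ?E \<longleftrightarrow> i \<in> {1..n} \<and> \<sigma> i > i" unfolding Es_def by simp
  have fE: "finite ?E" unfolding Es_def by simp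
  have Pset: "{(i, j). 1 \<le> i \<and> i < j \<and> j \<le> n \<and> \<sigma> i > \<sigma> j} = Sigma ?E B"
  proof (intro set_eqI iffI)
    fix p assume "p \<in> {(i, j). 1 \<le> i \<and> i < j \<and> j \<le> n \<and> \<sigma> i > \<sigma> j}"
    then obtain i j where p: "p = (i,j)" "1 \<le> i" "i < j" "j \<le> n" "\<sigma> i > \<sigma> j" by auto
    have "i \<in> ?E"
    proof (rule ccontr)
      assume nE: "i \<notin> ?E"
      then have "\<sigma> i < i" using Ec[of i] D_props(2)[OF D, of i] p by auto
      then have "\<sigma> j < j" using p by simp
      then show False using incr_F[OF D, of i j] p \<open>\<sigma> i < i\<close> by auto
    qed
    then show "p \<in> Sigma ?E B" using p unfolding B_def by auto
  next
    fix p assume "p \<in> Sigma ?E B"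
    then show "p \<in> {(i, j). 1 \<le> i \<and> i < j \<and> j \<le> n \<and> \<sigma> i > \<sigma> j}" unfolding B_def Es_def by auto
  qed
  have fB: "\<And>i. finite (B i)" unfolding B_def by (rule finite_subset[of _ "{..n}"]) auto
  have cardB: "card (B i) + i = \<sigma> i" if i: "i \<in> ?E" for i
  proof -
    have i1: "i \<in> {1..n}" "\<sigma> i > i" using i Ec by auto
    have sin: "\<sigma> i \<in> {1..n}" using perm_facts(1)[OF P] i1 by auto
    have "\<sigma> ` {j\<in>{1..n}. \<sigma> j < \<sigma> i} = {1..<\<sigma> i}"
    proof (intro set_eqI iffI)
      fix y assume "y \<in> \<sigma> ` {j\<in>{1..n}. \<sigma> j < \<sigma> i}"
      then show "y \<in> {1..<\<sigma> i}" using perm_facts(1)[OF P] by force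
    next
      fix y assume y: "y \<in> {1..<\<sigma> i}"
      then have yn: "y \<in> {1..n}" using sin by auto
      have "inv \<sigma> y \<in> {1..n}" using yn permutes_inv[OF P] permutes_in_image by fastforce
      moreover have "\<sigma> (inv \<sigma> y) = y" using permutes_inverses(1)[OF P] .
      ultimately show "y \<in> \<sigma> ` {j\<in>{1..n}. \<sigma> j < \<sigma> i}" using y by (metis (mono_tags, lifting) atLeastLessThan_iff image_eqI mem_Collect_eq)
    qed
    then have c1: "card {j\<in>{1..n}. \<sigma> j < \<sigma> i} = \<sigma> i - 1"
      using card_image[OF inj_on_subset[OF inj, of "{j\<in>{1..n}. \<sigma> j < \<sigma> i}"]] by simp
    have lower: "\<sigma> j < \<sigma> i" if j: "j \<in> {1..<i}" for j
    proof (cases "j \<in> ?E")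
      case True
      then show ?thesis using incr_E[OF D, of j i] j i1 Ec by auto
    next
      case False
      then have "\<sigma> j < j" using Ec[of j] D_props(2)[OF D, of j] j i1 by auto
      then show ?thesis using j i1 by simp
    qed
    have "{j\<in>{1..n}. \<sigma> j < \<sigma> i} = {1..<i} \<union> B i" unfolding B_def using lower i1
      apply auto by (metis less_irrefl nat_neq_iff)
    moreover have "card ({1..<i} \<union> B i) = card {1..<i} + card (B i)"
      by (rule card_Un_disjoint) (auto simp: B_def)
    ultimately have "i - 1 + card (B i) = \<sigma> i - 1" using c1 by simp
    moreover have "1 \<le> i" using i1 by simp
    ultimately show ?thesis using i1(2) by linarith
  qed
  have "inv_stat n \<sigma> = (\<Sum>i\<in>?E. card (B i))" unfolding inv_stat_def Pset
    using card_SigmaI[OF fE, of B] fB by blast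
  then have "inv_stat n \<sigma> + sum id ?E = (\<Sum>i\<in>?E. card (B i) + i)" by (simp add: sum.distrib)
  also have "\<dots> = (\<Sum>i\<in>?E. \<sigma> i)" using cardB by simp
  also have "\<dots> = sum id (Vs n \<sigma>)" unfolding Vs_def
    by (simp add: sum.reindex[OF inj_on_subset[OF inj]])
  finally show ?thesis .
qed

definition Rset :: "nat \<Rightarrow> (nat \<Rightarrow> nat) set" where
  "Rset n = {\<sigma> \<in> derangements_321 n. Es n \<sigma> \<inter> Vs n \<sigma> = {}}"
definition Cset :: "nat \<Rightarrow> (nat \<Rightarrow> nat) \<Rightarrow> nat set" where
  "Cset n \<sigma> = {1..n} - (Es n \<sigma> \<union> Vs n \<sigma>)"
definition Phi :: "nat \<Rightarrow> (nat \<Rightarrow> nat) \<times> nat set \<Rightarrow> nat \<Rightarrow> nat" where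
  "Phi n p = build n (Es n (fst p) \<union> snd p) (Vs n (fst p) \<union> snd p)"

lemma phi_props:
  assumes R: "\<sigma>0 \<in> Rset n" and S: "S \<subseteq> Cset n \<sigma>0"
  shows "Phi n (\<sigma>0, S) \<in> derangements_321 n" "Es n (Phi n (\<sigma>0, S)) = Es n \<sigma>0 \<union> S"
    "Vs n (Phi n (\<sigma>0, S)) = Vs n \<sigma>0 \<union> S"
proof -
  let ?E = "Es n \<sigma>0" and ?V = "Vs n \<sigma>0"
  have D: "\<sigma>0 \<in> derangements_321 n" and dj: "?E \<inter> ?V = {}" using R unfolding Rset_def by auto
  have v: "valid n ?E ?V" by (rule valid_D[OF D])
  have e1: "?E - ?V = ?E" and e2: "?V - ?E = ?V" using dj by auto
  have "valid n ((?E - ?V) \<union> S) ((?V - ?E) \<union> S)"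
    by (rule valid_shift[OF v]) (use S e1 e2 in \<open>simp add: Cset_def\<close>)
  then have v2: "valid n (?E \<union> S) (?V \<union> S)" unfolding e1 e2 .
  show "Phi n (\<sigma>0, S) \<in> derangements_321 n" "Es n (Phi n (\<sigma>0, S)) = ?E \<union> S"
    "Vs n (Phi n (\<sigma>0, S)) = ?V \<union> S" unfolding Phi_def fst_conv snd_conv using build_D[OF v2] by auto
qed

lemma finite_D: "finite (derangements_321 n)"
proof -
  have "derangements_321 n \<subseteq> {\<sigma>. \<sigma> permutes {1..n}}" unfolding derangements_321_def by auto
  then show ?thesis using finite_permutations[of "{1..n}"] finite_subset by blast
qed

lemma phi_bij: "bij_betw (Phi n) (Sigma (Rset n) (\<lambda>\<sigma>0. Pow (Cset n \<sigma>0))) (derangements_321 n)"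
proof (rule bij_betw_imageI)
  show "inj_on (Phi n) (Sigma (Rset n) (\<lambda>\<sigma>0. Pow (Cset n \<sigma>0)))"
  proof (rule inj_onI)
    fix p1 p2 assume p1: "p1 \<in> Sigma (Rset n) (\<lambda>\<sigma>0. Pow (Cset n \<sigma>0))"
      and p2: "p2 \<in> Sigma (Rset n) (\<lambda>\<sigma>0. Pow (Cset n \<sigma>0))" and eq: "Phi n p1 = Phi n p2"
    obtain s1 S1 where q1: "p1 = (s1, S1)" "s1 \<in> Rset n" "S1 \<subseteq> Cset n s1" using p1 by auto
    obtain s2 S2 where q2: "p2 = (s2, S2)" "s2 \<in> Rset n" "S2 \<subseteq> Cset n s2" using p2 by auto
    note a = phi_props[OF q1(2,3)] and b = phi_props[OF q2(2,3)]
    have d1: "Es n s1 \<inter> Vs n s1 = {}" "s1 \<in> derangements_321 n" using q1 unfolding Rset_def by auto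
    have d2: "Es n s2 \<inter> Vs n s2 = {}" "s2 \<in> derangements_321 n" using q2 unfolding Rset_def by auto
    have E12: "Es n s1 \<union> S1 = Es n s2 \<union> S2" using a(2) b(2) eq q1 q2 by simp
    have V12: "Vs n s1 \<union> S1 = Vs n s2 \<union> S2" using a(3) b(3) eq q1 q2 by simp
    have "S1 = (Es n s1 \<union> S1) \<inter> (Vs n s1 \<union> S1)" using d1 q1(3) unfolding Cset_def by auto
    moreover have "S2 = (Es n s2 \<union> S2) \<inter> (Vs n s2 \<union> S2)" using d2 q2(3) unfolding Cset_def by auto
    ultimately have S12: "S1 = S2" using E12 V12 by simp
    have "Es n s1 = (Es n s1 \<union> S1) - S1" using q1(3) unfolding Cset_def by auto
    moreover have "Es n s2 = (Es n s2 \<union> S2) - S2" using q2(3) unfolding Cset_def by auto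
    ultimately have e: "Es n s1 = Es n s2" using E12 S12 by simp
    have "Vs n s1 = (Vs n s1 \<union> S1) - S1" using q1(3) unfolding Cset_def by auto
    moreover have "Vs n s2 = (Vs n s2 \<union> S2) - S2" using q2(3) unfolding Cset_def by auto
    ultimately have v: "Vs n s1 = Vs n s2" using V12 S12 by simp
    have "s1 = s2" using sigma_build[OF d1(2)] sigma_build[OF d2(2)] e v by simp
    then show "p1 = p2" using q1 q2 S12 by simp
  qed
  show "Phi n ` Sigma (Rset n) (\<lambda>\<sigma>0. Pow (Cset n \<sigma>0)) = derangements_321 n"
  proof
    show "Phi n ` Sigma (Rset n) (\<lambda>\<sigma>0. Pow (Cset n \<sigma>0)) \<subseteq> derangements_321 n"
      using phi_props(1) by auto
    show "derangements_321 n \<subseteq> Phi n ` Sigma (Rset n) (\<lambda>\<sigma>0. Pow (Cset n \<sigma>0))"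
    proof
      fix \<sigma> assume D: "\<sigma> \<in> derangements_321 n"
      let ?E = "Es n \<sigma>" and ?V = "Vs n \<sigma>"
      let ?A = "?E - ?V" and ?B = "?V - ?E" and ?S = "?E \<inter> ?V"
      have v: "valid n ?E ?V" by (rule valid_D[OF D])
      have "valid n (?A \<union> {}) (?B \<union> {})" by (rule valid_shift[OF v]) simp
      then have vAB: "valid n ?A ?B" by simp
      note b = build_D[OF vAB]
      define \<sigma>0 where "\<sigma>0 = build n ?A ?B"
      have R: "\<sigma>0 \<in> Rset n" unfolding Rset_def \<sigma>0_def using b by auto
      have ES: "?E \<subseteq> {1..n}" unfolding Es_def by auto
      have S: "?S \<subseteq> Cset n \<sigma>0" unfolding Cset_def \<sigma>0_def using b(2,3) ES by auto
      have "Phi n (\<sigma>0, ?S) = build n (?A \<union> ?S) (?B \<union> ?S)" unfolding Phi_def \<sigma>0_def using b by simp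
      also have "?A \<union> ?S = ?E" by auto
      also have "?B \<union> ?S = ?V" by auto
      also have "build n ?E ?V = \<sigma>" by (rule sym[OF sigma_build[OF D]])
      finally have eq: "Phi n (\<sigma>0, ?S) = \<sigma>" .
      have mem: "(\<sigma>0, ?S) \<in> Sigma (Rset n) (\<lambda>\<sigma>0. Pow (Cset n \<sigma>0))" using R S by simp
      show "\<sigma> \<in> Phi n ` Sigma (Rset n) (\<lambda>\<sigma>0. Pow (Cset n \<sigma>0))" using image_eqI[of \<sigma> "Phi n", OF eq[symmetric] mem] .
    qed
  qed
qed


lemma pow_sum: assumes "finite C" shows "(\<Sum>S\<in>Pow C. (T::real) ^ card S) = (1 + T) ^ card C"
proof -
  have "(\<Prod>x\<in>C. T + 1) = (\<Sum>X\<in>Pow C. (\<Prod>x\<in>X. T) * (\<Prod>x\<in>C-X. 1))"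
    by (rule prod_add[OF assms])
  then show ?thesis by (simp add: add.commute)
qed

lemma main_sum:
  "P_inv_cpk_exc n q y T =
   (\<Sum>\<sigma>0\<in>Rset n. q ^ inv_stat n \<sigma>0 * (y * T) ^ card (Vs n \<sigma>0) * (1 + T) ^ (n - 2 * card (Vs n \<sigma>0)))"
proof -
  let ?g = "\<lambda>\<sigma>. q ^ inv_stat n \<sigma> * y ^ cpk_stat n \<sigma> * T ^ exc_stat n \<sigma>"
  have fR: "finite (Rset n)" using finite_D[of n] unfolding Rset_def by simp
  have P: "P_inv_cpk_exc n q y T = (\<Sum>p\<in>Sigma (Rset n) (\<lambda>\<sigma>0. Pow (Cset n \<sigma>0)). ?g (Phi n p))"
    unfolding P_inv_cpk_exc_def using sum.reindex_bij_betw[OF phi_bij[of n], of ?g] by simp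
  also have "\<dots> = (\<Sum>\<sigma>0\<in>Rset n. \<Sum>S\<in>Pow (Cset n \<sigma>0). ?g (Phi n (\<sigma>0, S)))"
  proof -
    have "(\<Sum>\<sigma>0\<in>Rset n. \<Sum>S\<in>Pow (Cset n \<sigma>0). ?g (Phi n (\<sigma>0, S))) =
       (\<Sum>(a,b)\<in>Sigma (Rset n) (\<lambda>\<sigma>0. Pow (Cset n \<sigma>0)). ?g (Phi n (a, b)))"
      by (rule sum.Sigma) (use fR in \<open>auto simp: Cset_def\<close>)
    then show ?thesis by (simp add: split_beta)
  qed
  also have "\<dots> = (\<Sum>\<sigma>0\<in>Rset n. q ^ inv_stat n \<sigma>0 * (y * T) ^ card (Vs n \<sigma>0) * (1 + T) ^ (n - 2 * card (Vs n \<sigma>0)))"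
  proof (rule sum.cong[OF refl])
    fix \<sigma>0 assume R: "\<sigma>0 \<in> Rset n"
    let ?E = "Es n \<sigma>0" and ?V = "Vs n \<sigma>0" and ?C = "Cset n \<sigma>0"
    have D: "\<sigma>0 \<in> derangements_321 n" and dj: "?E \<inter> ?V = {}" using R unfolding Rset_def by auto
    have v: "valid n ?E ?V" by (rule valid_D[OF D])
    have EVn: "?E \<subseteq> {1..n}" "?V \<subseteq> {1..n}" "card ?E = card ?V" using v unfolding valid_def by auto
    have fE: "finite ?E" by (rule finite_subset[OF EVn(1)]) simp
    have fV: "finite ?V" by (rule finite_subset[OF EVn(2)]) simp
    have fC: "finite ?C" unfolding Cset_def by simp
    have trm: "?g (Phi n (\<sigma>0, S)) = q ^ inv_stat n \<sigma>0 * (y * T) ^ card ?V * T ^ card S"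
      if S: "S \<in> Pow ?C" for S
    proof -
      have S': "S \<subseteq> ?C" using S by simp
      note ph = phi_props[OF R S']
      let ?b = "Phi n (\<sigma>0, S)"
      have fS: "finite S" using finite_subset[OF S' fC] .
      have dS: "?E \<inter> S = {}" "?V \<inter> S = {}" using S' unfolding Cset_def by auto
      have i1: "inv_stat n ?b + sum id (?E \<union> S) = sum id (?V \<union> S)" using inv_eq[OF ph(1)] ph(2,3) by simp
      have i2: "inv_stat n \<sigma>0 + sum id ?E = sum id ?V" using inv_eq[OF D] .
      have "sum id (?E \<union> S) = sum id ?E + sum id S" by (rule sum.union_disjoint) (use fE fS dS in auto)
      moreover have "sum id (?V \<union> S) = sum id ?V + sum id S" by (rule sum.union_disjoint) (use fV fS dS in auto)
      ultimately have inv: "inv_stat n ?b = inv_stat n \<sigma>0" using i1 i2 by linarith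
      have "(?V \<union> S) - (?E \<union> S) = ?V" using dj dS by auto
      then have cpk: "cpk_stat n ?b = card ?V" using cpk_eq[OF ph(1)] ph(2,3) by simp
      have "card (?E \<union> S) = card ?E + card S" by (rule card_Un_disjoint) (use fE fS dS in auto)
      then have exc: "exc_stat n ?b = card ?V + card S" using exc_eq[of n ?b] ph(2) EVn(3) by simp
      show ?thesis unfolding inv cpk exc by (simp add: power_add power_mult_distrib)
    qed
    have "(\<Sum>S\<in>Pow ?C. ?g (Phi n (\<sigma>0, S))) = (\<Sum>S\<in>Pow ?C. q ^ inv_stat n \<sigma>0 * (y * T) ^ card ?V * T ^ card S)"
      using trm by (rule sum.cong[OF refl])
    also have "\<dots> = q ^ inv_stat n \<sigma>0 * (y * T) ^ card ?V * (\<Sum>S\<in>Pow ?C. T ^ card S)"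
      by (simp add: sum_distrib_left)
    also have "\<dots> = q ^ inv_stat n \<sigma>0 * (y * T) ^ card ?V * (1 + T) ^ card ?C" using pow_sum[OF fC] by simp
    also have "card ?C = n - 2 * card ?V"
    proof -
      have "card (?E \<union> ?V) = card ?E + card ?V" by (rule card_Un_disjoint) (use fE fV dj in auto)
      moreover have "card ?C = card {1..n} - card (?E \<union> ?V)" unfolding Cset_def
        by (rule card_Diff_subset) (use fE fV EVn in auto)
      ultimately show ?thesis using EVn(3) by simp
    qed
    finally show "(\<Sum>S\<in>Pow ?C. ?g (Phi n (\<sigma>0, S))) = q ^ inv_stat n \<sigma>0 * (y * T) ^ card ?V * (1 + T) ^ (n - 2 * card ?V)" .
  qed
  finally show ?thesis .
qed

lemma two_k_le: assumes "\<sigma>0 \<in> Rset n" shows "2 * card (Vs n \<sigma>0) \<le> n"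
proof -
  let ?E = "Es n \<sigma>0" and ?V = "Vs n \<sigma>0"
  have D: "\<sigma>0 \<in> derangements_321 n" and dj: "?E \<inter> ?V = {}" using assms unfolding Rset_def by auto
  have v: "valid n ?E ?V" by (rule valid_D[OF D])
  have EVn: "?E \<subseteq> {1..n}" "?V \<subseteq> {1..n}" "card ?E = card ?V" using v unfolding valid_def by auto
  have fE: "finite ?E" by (rule finite_subset[OF EVn(1)]) simp
  have fV: "finite ?V" by (rule finite_subset[OF EVn(2)]) simp
  have "card (?E \<union> ?V) = card ?E + card ?V" by (rule card_Un_disjoint) (use fE fV dj in auto)
  moreover have "card (?E \<union> ?V) \<le> card {1..n}" by (rule card_mono) (use EVn in auto)
  ultimately show ?thesis using EVn(3) by simp
qed

theorem corollary3p8: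
  fixes n :: nat and q x t :: real
  assumes "n \<ge> 1"
    and "1 + x \<noteq> 0" and "x + t \<noteq> 0" and "1 + x * t \<noteq> 0"
  shows "P_inv_exc n q t =
    ((1 + x * t) / (1 + x)) ^ n *
    P_inv_cpk_exc n q ((1 + x)^2 * t / ((x + t) * (1 + x * t))) ((x + t) / (1 + x * t))"
proof -
  define c where "c = (1 + x * t) / (1 + x)"
  define y where "y = (1 + x)^2 * t / ((x + t) * (1 + x * t))"
  define T where "T = (x + t) / (1 + x * t)"
  have c2: "c ^ 2 * (y * T) = t"
  proof -
    define Dn where "Dn = (1+x)^2 * ((x+t)*(1+x*t)) * (1+x*t)"
    have Dn0: "Dn \<noteq> 0" unfolding Dn_def using assms by simp
    have "c ^ 2 * (y * T) = ((1+x*t)^2 * ((1+x)^2 * t) * (x+t)) / Dn"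
      unfolding c_def y_def T_def Dn_def by (simp add: power_divide)
    also have "(1+x*t)^2 * ((1+x)^2 * t) * (x+t) = t * Dn" unfolding Dn_def by (simp add: power2_eq_square algebra_simps)
    finally show ?thesis using Dn0 by simp
  qed
  have c1: "c * (1 + T) = 1 + t"
  proof -
    have a: "1 + T = (1 + x*t + (x+t)) / (1 + x*t)" unfolding T_def using assms(4) by (simp add: field_simps)
    define Dn where "Dn = (1+x) * (1+x*t)"
    have Dn0: "Dn \<noteq> 0" unfolding Dn_def using assms by simp
    have "c * (1 + T) = ((1+x*t) * (1 + x*t + (x+t))) / Dn" unfolding a c_def Dn_def by simp
    also have "(1+x*t) * (1 + x*t + (x+t)) = (1 + t) * Dn" unfolding Dn_def by (simp add: algebra_simps)
    finally show ?thesis using Dn0 by simp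
  qed
  have L: "P_inv_exc n q t = P_inv_cpk_exc n q 1 t" unfolding P_inv_exc_def P_inv_cpk_exc_def by simp
  have key: "c ^ n * ((y * T) ^ k * (1 + T) ^ (n - 2 * k)) = (1 * t) ^ k * (1 + t) ^ (n - 2 * k)"
    if k: "2 * k \<le> n" for k
  proof -
    obtain m where m: "n = 2 * k + m" using k le_Suc_ex by blast
    have "c ^ n * ((y * T) ^ k * (1 + T) ^ (n - 2 * k)) = (c ^ 2 * (y * T)) ^ k * (c * (1 + T)) ^ m"
      unfolding m by (simp add: power_add power_mult power_mult_distrib)
    also have "\<dots> = t ^ k * (1 + t) ^ m" unfolding c2 c1 ..
    finally show ?thesis using m by simp
  qed
  have "c ^ n * P_inv_cpk_exc n q y T =
     (\<Sum>\<sigma>0\<in>Rset n. q ^ inv_stat n \<sigma>0 * (c ^ n * ((y * T) ^ card (Vs n \<sigma>0) * (1 + T) ^ (n - 2 * card (Vs n \<sigma>0)))))"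
    unfolding main_sum by (simp add: sum_distrib_left mult_ac)
  also have "\<dots> = (\<Sum>\<sigma>0\<in>Rset n. q ^ inv_stat n \<sigma>0 * ((1 * t) ^ card (Vs n \<sigma>0) * (1 + t) ^ (n - 2 * card (Vs n \<sigma>0))))"
    using key two_k_le by (intro sum.cong refl) simp
  also have "\<dots> = P_inv_cpk_exc n q 1 t" unfolding main_sum by (simp add: mult_ac)
  finally show ?thesis unfolding L c_def y_def T_def by simp
qed

end
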